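(* Let $(V,\cdot)$ be a nondegenerate intersection pairing of odd type that is not positive definite. Then there exists $u\in V$ with $u\cdot u=-n<0$ such that $u$ is ordinary (indeed $u\in 2V$) and $n-1$ is not of the form $4^a(8b+7)$ for nonnegative integers $a,b$.
   Context: An intersection pairing is a finitely generated free abelian group $V$ with a symmetric bilinear form $V\times V\to\mathbf{Z}$, $(u,w)\mapsto u\cdot w$; nondegenerate means the adjoint $V\to\mathrm{Hom}(V,\mathbf{Z})$ has nonzero determinant. It has odd type if $w\cdot w$ is odd for some $w\in V$. Positive definite means $u\cdot u>0$ for all $u\neq 0$. An element $v\in V$ is characteristic if $v\cdot w\equiv w\cdot w \pmod 2$ for all $w\in V$, and ordinary otherwise. *)

theory Defs
  imports "HOL-Analysis.Analysis"
begin

text \<open>An intersection pairing on the free abelian group V = Z^n (n = CARD('n) \<ge> 1,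
  a basis being fixed): a symmetric Z-bilinear form.\<close>

definition intersection_pairing :: "(int^'n \<Rightarrow> int^'n \<Rightarrow> int) \<Rightarrow> bool" where
  "intersection_pairing B \<longleftrightarrow>
     (\<forall>u w. B u w = B w u) \<and>
     (\<forall>u v w. B (u + v) w = B u w + B v w) \<and>
     (\<forall>c u w. B (c *s u) w = c * B u w)"

text \<open>Matrix of the adjoint V \<rightarrow> Hom(V,Z) w.r.t. the standard basis and its dual.\<close>
definition gram_matrix :: "(int^'n \<Rightarrow> int^'n \<Rightarrow> int) \<Rightarrow> int^'n^'n" where
  "gram_matrix B = (\<chi> i j. B (axis i 1) (axis j 1))"

definition nondegenerate :: "(int^'n \<Rightarrow> int^'n \<Rightarrow> int) \<Rightarrow> bool" where
  "nondegenerate B \<longleftrightarrow> det (gram_matrix B) \<noteq> 0"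

definition odd_type :: "(int^'n \<Rightarrow> int^'n \<Rightarrow> int) \<Rightarrow> bool" where
  "odd_type B \<longleftrightarrow> (\<exists>w. odd (B w w))"

definition positive_definite :: "(int^'n \<Rightarrow> int^'n \<Rightarrow> int) \<Rightarrow> bool" where
  "positive_definite B \<longleftrightarrow> (\<forall>u. u \<noteq> 0 \<longrightarrow> B u u > 0)"

definition characteristic :: "(int^'n \<Rightarrow> int^'n \<Rightarrow> int) \<Rightarrow> int^'n \<Rightarrow> bool" where
  "characteristic B v \<longleftrightarrow> (\<forall>w. B v w mod 2 = B w w mod 2)"

definition ordinary :: "(int^'n \<Rightarrow> int^'n \<Rightarrow> int) \<Rightarrow> int^'n \<Rightarrow> bool" where
  "ordinary B v \<longleftrightarrow> \<not> characteristic B v"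

end

theory Submission
  imports Defs
begin

lemma ip_zero:
  assumes "intersection_pairing B" shows "B 0 w = 0"
proof -
  have "B (0 + 0) w = B 0 w + B 0 w" using assms unfolding intersection_pairing_def by blast
  then show ?thesis by simp
qed

lemma ip_sum:
  assumes "intersection_pairing B" and "finite S"
  shows "B (sum f S) w = (\<Sum>i\<in>S. B (f i) w)"
  using assms(2)
proof (induction S rule: finite_induct)
  case empty then show ?case using ip_zero[OF assms(1)] by simp
next
  case (insert x F)
  have ad: "\<And>u v w. B (u + v) w = B u w + B v w"
    using assms(1) unfolding intersection_pairing_def by blast
  show ?case using insert by (simp add: ad)
qed

lemma ip_quad:
  assumes "intersection_pairing B"
  shows "B (a *s v + y) (a *s v + y) = a*a*B v v + 2*a*B v y + B y y"
proof -
  have s: "\<And>u w. B u w = B w u" and ad: "\<And>u v w. B (u + v) w = B u w + B v w"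
    and sc: "\<And>c u w. B (c *s u) w = c * B u w"
    using assms unfolding intersection_pairing_def by blast+
  have "B (a *s v + y) (a *s v + y) = a * B v (a *s v + y) + B y (a *s v + y)"
    by (simp add: ad sc)
  also have "B v (a *s v + y) = a * B v v + B v y"
    by (metis s ad sc)
  also have "B y (a *s v + y) = a * B v y + B y y"
    by (metis s ad sc)
  finally show ?thesis by (simp add: algebra_simps)
qed

lemma ip_axis:
  assumes "intersection_pairing B"
  shows "B v (axis j 1) = (gram_matrix B *v v) $ j"
proof -
  have s: "\<And>u w. B u w = B w u"
    and sc: "\<And>c u w. B (c *s u) w = c * B u w"
    using assms unfolding intersection_pairing_def by blast+
  have "B v (axis j 1) = B (\<Sum>i\<in>UNIV. v$i *s axis i 1) (axis j 1)"
    by (simp add: basis_expansion)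
  also have "\<dots> = (\<Sum>i\<in>UNIV. v$i * B (axis i 1) (axis j 1))"
    by (simp add: ip_sum[OF assms] sc)
  also have "\<dots> = (\<Sum>i\<in>UNIV. B (axis j 1) (axis i 1) * v$i)"
    by (simp add: s mult.commute)
  finally show ?thesis by (simp add: gram_matrix_def matrix_vector_mult_def)
qed

lemma det_of_int:
  fixes G :: "int^'n^'n"
  shows "det ((\<chi> i j. real_of_int (G$i$j)) :: real^'n^'n) = real_of_int (det G)"
  unfolding det_def by (simp add: of_int_sum of_int_prod of_int_mult)

lemma nondeg_witness:
  fixes B :: "int^'n \<Rightarrow> int^'n \<Rightarrow> int"
  assumes "intersection_pairing B" "nondegenerate B" "v \<noteq> 0"
  shows "\<exists>y. B v y \<noteq> 0"
proof (rule ccontr)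
  assume "\<not> (\<exists>y. B v y \<noteq> 0)"
  then have z: "\<And>j. (gram_matrix B *v v) $ j = 0" using ip_axis[OF assms(1)] by metis
  define G where "G = gram_matrix B"
  define A where "A = ((\<chi> i j. real_of_int (G$i$j)) :: real^'n^'n)"
  define x where "x = ((\<chi> i. real_of_int (v$i)) :: real^'n)"
  have Ax: "A *v x = 0"
  proof -
    have "\<And>i. (A *v x) $ i = real_of_int ((G *v v) $ i)"
      by (simp add: A_def x_def matrix_vector_mult_def of_int_sum)
    then show ?thesis using z unfolding G_def by (simp add: vec_eq_iff)
  qed
  obtain k where k: "v$k \<noteq> 0" using assms(3) by (metis vec_eq_iff zero_index)
  have "det((\<chi> i j. if j = k then (A *v x)$i else A$i$j):: real^'n^'n) = x$k * det A"
    by (rule cramer_lemma)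
  moreover have "det((\<chi> i j. if j = k then (A *v x)$i else A$i$j):: real^'n^'n) = 0"
    by (rule det_zero_column(2)[of k]) (simp add: Ax column_def vec_eq_iff)
  ultimately have "x$k * det A = 0" by simp
  then have "det A = 0" using k by (simp add: x_def)
  then have "det G = 0" using det_of_int[of G] by (simp add: A_def)
  then show False using assms(2) by (simp add: nondegenerate_def G_def)
qed

lemma arith_aux1:
  fixes mmc mm a aa mb mbb ma1 :: int
  shows "0 \<le> aa \<Longrightarrow> mmc \<le> - mm \<Longrightarrow> a \<le> aa \<Longrightarrow> mb \<le> mbb \<Longrightarrow> mm = mbb + ma1 \<Longrightarrow> 1 * (aa+1) \<le> ma1
    \<Longrightarrow> 4*mmc + 4*mb + a < 0" by presburger

lemma arith_aux2:
  fixes x p y q :: int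
  shows "0 \<le> q \<Longrightarrow> x = - p \<Longrightarrow> 1 * (q + 1) \<le> p \<Longrightarrow> y \<le> q \<Longrightarrow> 2 * x + y < 0" by presburger

lemma neg_vec:
  assumes "intersection_pairing B" "nondegenerate B" "\<not> positive_definite B"
  shows "\<exists>v. B v v < 0"
proof -
  obtain v where v: "v \<noteq> 0" "B v v \<le> 0" using assms(3) unfolding positive_definite_def by force
  show ?thesis
  proof (cases "B v v < 0")
    case True then show ?thesis by blast
  next
    case False
    then have vv: "B v v = 0" using v by simp
    obtain y where c: "B v y \<noteq> 0" using nondeg_witness[OF assms(1,2) v(1)] by blast
    define m where "m = - sgn (B v y) * (\<bar>B y y\<bar> + 1)"
    have q: "B (m *s v + y) (m *s v + y) = 2*(m*B v y) + B y y"
      using ip_quad[OF assms(1)] vv by (simp add: mult.assoc)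
    have f1: "m * B v y = - (\<bar>B v y\<bar> * (\<bar>B y y\<bar> + 1))"
      unfolding m_def by (simp add: abs_sgn algebra_simps)
    have f2: "1 * (\<bar>B y y\<bar> + 1) \<le> \<bar>B v y\<bar> * (\<bar>B y y\<bar> + 1)"
    proof -
      have "1 \<le> \<bar>B v y\<bar>" using c by linarith
      then show ?thesis by (rule mult_right_mono) auto
    qed
    have f3: "B y y \<le> \<bar>B y y\<bar>" by simp
    have f0: "0 \<le> \<bar>B y y\<bar>" by simp
    have "B (m *s v + y) (m *s v + y) < 0" unfolding q by (rule arith_aux2[OF f0 f1 f2 f3])
    then show ?thesis by blast
  qed
qed

lemma odd_neg_vec:
  assumes "intersection_pairing B" "nondegenerate B" "\<not> positive_definite B" "odd_type B"
  shows "\<exists>w. B w w < 0 \<and> odd (B w w)"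
proof -
  obtain v where v: "B v v < 0" using neg_vec[OF assms(1-3)] by blast
  obtain x where x: "odd (B x x)" using assms(4) unfolding odd_type_def by blast
  define a where "a = B x x"
  define b where "b = B v x"
  define c where "c = B v v"
  define m where "m = \<bar>a\<bar> + \<bar>b\<bar> + 1"
  have q: "B ((2*m) *s v + x) ((2*m) *s v + x) = 4*(m*m*c) + 4*(m*b) + a"
    using ip_quad[OF assms(1), of "2*m" v x] unfolding a_def b_def c_def by (simp add: algebra_simps)
  have m1: "m \<ge> 1" unfolding m_def by simp
  have "m*m*c \<le> m*m*(-1)" using v m1 unfolding c_def by (intro mult_left_mono) auto
  then have g1: "m*m*c \<le> - (m*m)" by simp
  have g2: "a \<le> \<bar>a\<bar>" by simp
  have g3: "m*b \<le> m*\<bar>b\<bar>" using m1 by (intro mult_left_mono) auto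
  have g4: "m*m = m*(\<bar>b\<bar>) + m*(\<bar>a\<bar> + 1)" unfolding m_def by (simp add: algebra_simps)
  have g5: "1*(\<bar>a\<bar> + 1) \<le> m*(\<bar>a\<bar> + 1)" using m1 by (rule mult_right_mono) simp
  have g0: "0 \<le> \<bar>a\<bar>" by simp
  have neg: "4*(m*m*c) + 4*(m*b) + a < 0" by (rule arith_aux1[OF g0 g1 g2 g3 g4 g5])
  have "odd (4*(m*m*c) + 4*(m*b) + a)" using x unfolding a_def by simp
  with neg q show ?thesis by metis
qed

theorem mainTheorem6:
  fixes B :: "int^'n \<Rightarrow> int^'n \<Rightarrow> int"
  assumes "intersection_pairing B"
    and "nondegenerate B"
    and "odd_type B"
    and "\<not> positive_definite B"
  shows "\<exists>u (n::int). B u u = - n \<and> n > 0 \<and> ordinary B u \<and> (\<exists>w. u = 2 *s w) \<and>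
           \<not> (\<exists>a b :: nat. n - 1 = 4 ^ a * (8 * int b + 7))"
proof -
  have s: "\<And>u w. B u w = B w u"
    and sc: "\<And>c u w. B (c *s u) w = c * B u w"
    using assms(1) unfolding intersection_pairing_def by blast+
  obtain w where w: "B w w < 0" "odd (B w w)" using odd_neg_vec[OF assms(1,2,4,3)] by blast
  obtain x where x: "odd (B x x)" using assms(3) unfolding odd_type_def by blast
  define q where "q = B w w"
  have uu: "B (2 *s w) (2 *s w) = - (- 4 * q)" unfolding q_def by (simp add: sc s[of w "2 *s w"])
  have ord: "ordinary B (2 *s w)"
    unfolding ordinary_def characteristic_def
  proof
    assume "\<forall>y. B (2 *s w) y mod 2 = B y y mod 2"
    then have "B (2 *s w) x mod 2 = B x x mod 2" by blast
    then show False using x by (simp add: sc) presburger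
  qed
  have nt: "\<not> (\<exists>a b :: nat. - 4 * q - 1 = 4 ^ a * (8 * int b + 7))"
  proof
    assume "\<exists>a b :: nat. - 4 * q - 1 = 4 ^ a * (8 * int b + 7)"
    then obtain a b where ab: "- 4 * q - 1 = 4 ^ a * (8 * int b + 7)" by blast
    show False
    proof (cases a)
      case 0
      then have "- 4 * q - 1 = 8 * int b + 7" using ab by simp
      then show False using w(2) unfolding q_def by presburger
    next
      case (Suc a')
      then have "- 4 * q - 1 = 4 * (4 ^ a' * (8 * int b + 7))" using ab by simp
      then show False by presburger
    qed
  qed
  show ?thesis
    apply (rule exI[of _ "2 *s w"], rule exI[of _ "- 4 * q"])
    using uu ord nt w(1) unfolding q_def by auto
qed

end
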